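(* Let $\epsilon\in(0,1)$, $u_0\in\mathbb{R}\setminus\{0,1,-1\}$, and let $h^*=\frac{\epsilon^2}{u_0^2+|u_0|}$ if $|u_0|>1$ and $h^*=\frac{\epsilon^2}{2}$ if $0<|u_0|<1$. For every $h\in(0,h^*]$, the sequence $(u_n)_{n\ge0}$ generated by the explicit Euler scheme $$\frac{u_n-u_{n-1}}{h}+\frac{1}{\epsilon^2}\big(u_{n-1}^3-u_{n-1}\big)=0,\qquad n\ge 1,$$ satisfies $E(u_n)\le E(u_{n-1})$ for all $n\ge1$, where $E(v)=\frac{1}{4\epsilon^2}(v^2-1)^2$.
   Context: The scheme discretizes the ODE $u'(t)+\frac{1}{\epsilon^2}(u^3-u)=0$, $u(0)=u_0$, whose energy is $E(u)=\frac{1}{\epsilon^2}F(u)$ with $F(u)=\frac14(u^2-1)^2$. *)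

theory Defs
  imports Complex_Main
begin

definition energy :: "real \<Rightarrow> real \<Rightarrow> real" where
  "energy eps v = (v\<^sup>2 - 1)\<^sup>2 / (4 * eps\<^sup>2)"

fun euler_seq :: "real \<Rightarrow> real \<Rightarrow> real \<Rightarrow> nat \<Rightarrow> real" where
  "euler_seq eps h u0 0 = u0"
| "euler_seq eps h u0 (Suc n) =
     (let v = euler_seq eps h u0 n in v - h / eps\<^sup>2 * (v ^ 3 - v))"

definition hstar :: "real \<Rightarrow> real \<Rightarrow> real" where
  "hstar eps u0 = (if \<bar>u0\<bar> > 1 then eps\<^sup>2 / (u0\<^sup>2 + \<bar>u0\<bar>) else eps\<^sup>2 / 2)"

end

theory Submission
  imports Defs
begin

lemma stepA:
  fixes k a v :: real
  assumes "0 \<le> k" "k * (a^2 + a) \<le> 1" "1 \<le> v" "v \<le> a"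
  shows "1 \<le> v - k * (v^3 - v) \<and> v - k * (v^3 - v) \<le> v"
proof -
  have "v*(v+1) \<le> a*(a+1)" using assms by (intro mult_mono) auto
  hence "k*(v*(v+1)) \<le> k*(a*(a+1))" using assms(1) by (rule mult_left_mono)
  also have "k*(a*(a+1)) = k * (a^2 + a)" by (simp add: power2_eq_square algebra_simps)
  finally have "k*(v*(v+1)) \<le> 1" using assms(2) by linarith
  hence "0 \<le> (v-1)*(1 - k*(v*(v+1)))" using assms by simp
  moreover have "0 \<le> k*(v*(v-1)*(v+1))" using assms by simp
  ultimately show ?thesis by (simp add: algebra_simps power3_eq_cube)
qed

lemma stepB:
  fixes k v :: real
  assumes "0 \<le> k" "k \<le> 1/2" "0 \<le> v" "v \<le> 1"
  shows "v \<le> v - k * (v^3 - v) \<and> v - k * (v^3 - v) \<le> 1"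
proof -
  have "v*(v+1) \<le> 1*(1+1)" using assms by (intro mult_mono) auto
  hence "k*(v*(v+1)) \<le> (1/2)*2" using assms
    by (intro mult_mono) auto
  hence "k*(v*(v+1)) \<le> 1" by simp
  hence "0 \<le> (1-v)*(1 - k*(v*(v+1)))" using assms by simp
  moreover have "0 \<le> k*(v*(1-v)*(1+v))" using assms by simp
  ultimately show ?thesis by (simp add: algebra_simps power3_eq_cube)
qed

lemma odd_g: "(-v) - k * ((-v)^3 - (-v)) = - (v - k * (v^3 - v))" for v k :: real
  by (simp add: algebra_simps power3_eq_cube)

lemma en_le1:
  fixes w v eps :: real
  assumes "1 \<le> w" "w \<le> v"
  shows "energy eps w \<le> energy eps v"
proof -
  have "0 \<le> w^2 - 1" "w^2 - 1 \<le> v^2 - 1" using assms by (auto intro: power_mono simp: one_le_power)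
  hence "(w^2-1)^2 \<le> (v^2-1)^2" by (intro power_mono) auto
  thus ?thesis unfolding energy_def by (simp add: divide_right_mono)
qed

lemma en_le2:
  fixes w v eps :: real
  assumes "0 \<le> v" "v \<le> w" "w \<le> 1"
  shows "energy eps w \<le> energy eps v"
proof -
  have "0 \<le> 1 - w^2" "1 - w^2 \<le> 1 - v^2" using assms
    by (auto intro: power_mono simp: power_le_one)
  hence "(1 - w^2)^2 \<le> (1 - v^2)^2" by (intro power_mono) auto
  hence "(w^2-1)^2 \<le> (v^2-1)^2" by (simp add: power2_commute)
  thus ?thesis unfolding energy_def by (simp add: divide_right_mono)
qed

lemma en_neg: "energy eps (-v) = energy eps v"
  unfolding energy_def by simp

lemma stepA_abs:
  fixes k a v :: real
  assumes "0 \<le> k" "k * (a^2 + a) \<le> 1" "1 \<le> \<bar>v\<bar>" "\<bar>v\<bar> \<le> a"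
  shows "1 \<le> \<bar>v - k * (v^3 - v)\<bar> \<and> \<bar>v - k * (v^3 - v)\<bar> \<le> \<bar>v\<bar>"
proof (cases "v \<ge> 0")
  case True
  hence e: "\<bar>v\<bar> = v" by simp
  have H: "1 \<le> v - k * (v^3 - v) \<and> v - k * (v^3 - v) \<le> v"
    by (rule stepA[OF assms(1,2)]) (use assms e in linarith)+
  hence "\<bar>v - k * (v^3 - v)\<bar> = v - k * (v^3 - v)" by linarith
  with H e show ?thesis by linarith
next
  case False
  hence e: "\<bar>v\<bar> = -v" by simp
  have "1 \<le> -v - k * ((-v)^3 - (-v)) \<and> -v - k * ((-v)^3 - (-v)) \<le> -v"
    by (rule stepA[OF assms(1,2)]) (use assms e in linarith)+
  hence H: "1 \<le> -(v - k * (v^3 - v)) \<and> -(v - k * (v^3 - v)) \<le> -v"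
    by (simp only: odd_g)
  hence "\<bar>v - k * (v^3 - v)\<bar> = -(v - k * (v^3 - v))" by linarith
  with H e show ?thesis by linarith
qed

lemma stepB_abs:
  fixes k v :: real
  assumes "0 \<le> k" "k \<le> 1/2" "\<bar>v\<bar> \<le> 1"
  shows "\<bar>v\<bar> \<le> \<bar>v - k * (v^3 - v)\<bar> \<and> \<bar>v - k * (v^3 - v)\<bar> \<le> 1"
proof (cases "v \<ge> 0")
  case True
  hence e: "\<bar>v\<bar> = v" by simp
  have H: "v \<le> v - k * (v^3 - v) \<and> v - k * (v^3 - v) \<le> 1"
    by (rule stepB[OF assms(1,2)]) (use assms e True in linarith)+
  hence "\<bar>v - k * (v^3 - v)\<bar> = v - k * (v^3 - v)" using True by linarith
  with H e show ?thesis by linarith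
next
  case False
  hence e: "\<bar>v\<bar> = -v" by simp
  have "-v \<le> -v - k * ((-v)^3 - (-v)) \<and> -v - k * ((-v)^3 - (-v)) \<le> 1"
    by (rule stepB[OF assms(1,2)]) (use assms e False in linarith)+
  hence H: "-v \<le> -(v - k * (v^3 - v)) \<and> -(v - k * (v^3 - v)) \<le> 1"
    by (simp only: odd_g)
  hence "\<bar>v - k * (v^3 - v)\<bar> = -(v - k * (v^3 - v))" using False by linarith
  with H e show ?thesis by linarith
qed

lemma en_abs: "energy eps \<bar>v\<bar> = energy eps v"
  unfolding energy_def by simp

theorem theorem2p3:
  fixes eps u0 h :: real
  assumes "0 < eps" "eps < 1"
    and "u0 \<noteq> 0" "u0 \<noteq> 1" "u0 \<noteq> -1"
    and "0 < h" "h \<le> hstar eps u0"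
  shows "\<forall>n\<ge>1. energy eps (euler_seq eps h u0 n) \<le> energy eps (euler_seq eps h u0 (n - 1))"
proof -
  define k where "k = h / eps^2"
  have k0: "0 \<le> k" using assms unfolding k_def by simp
  have rec: "euler_seq eps h u0 (Suc n) = euler_seq eps h u0 n - k * ((euler_seq eps h u0 n)^3 - euler_seq eps h u0 n)" for n
    by (simp add: k_def Let_def)
  define a where "a = \<bar>u0\<bar>"
  show ?thesis
  proof (cases "\<bar>u0\<bar> > 1")
    case True
    have "h \<le> eps^2 / (u0^2 + \<bar>u0\<bar>)" using assms(7) True by (simp add: hstar_def)
    moreover have "0 < u0^2 + \<bar>u0\<bar>" using True by (intro add_nonneg_pos) auto
    ultimately have "h * (u0^2 + \<bar>u0\<bar>) \<le> eps^2" by (simp add: pos_le_divide_eq)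
    hence kb: "k * (a^2 + a) \<le> 1" using assms unfolding k_def a_def
      by (simp add: field_simps)
    have inv: "1 \<le> \<bar>euler_seq eps h u0 n\<bar> \<and> \<bar>euler_seq eps h u0 n\<bar> \<le> a" for n
    proof (induction n)
      case 0 then show ?case using True a_def by simp
    next
      case (Suc n)
      show ?case unfolding rec using stepA_abs[OF k0 kb, of "euler_seq eps h u0 n"] Suc by linarith
    qed
    show ?thesis
    proof (intro allI impI)
      fix n :: nat assume "n \<ge> 1"
      then obtain m where m: "n = Suc m" by (cases n) auto
      define v where "v = euler_seq eps h u0 m"
      have s: "1 \<le> \<bar>v - k * (v^3 - v)\<bar> \<and> \<bar>v - k * (v^3 - v)\<bar> \<le> \<bar>v\<bar>"
        using stepA_abs[OF k0 kb, of v] inv[of m] unfolding v_def by simp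
      have "energy eps \<bar>v - k * (v^3 - v)\<bar> \<le> energy eps \<bar>v\<bar>"
        using s by (intro en_le1) auto
      hence "energy eps (v - k * (v^3 - v)) \<le> energy eps v" by (simp only: en_abs)
      thus "energy eps (euler_seq eps h u0 n) \<le> energy eps (euler_seq eps h u0 (n - 1))"
        using m rec[of m] v_def by simp
    qed
  next
    case False
    have "h \<le> eps^2 / 2" using assms(7) False by (simp add: hstar_def)
    hence kb: "k \<le> 1/2" using assms unfolding k_def by (simp add: field_simps)
    have inv: "\<bar>euler_seq eps h u0 n\<bar> \<le> 1" for n
    proof (induction n)
      case 0 then show ?case using False by simp
    next
      case (Suc n)
      show ?case unfolding rec using stepB_abs[OF k0 kb, of "euler_seq eps h u0 n"] Suc by linarith
    qed
    show ?thesis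
    proof (intro allI impI)
      fix n :: nat assume "n \<ge> 1"
      then obtain m where m: "n = Suc m" by (cases n) auto
      define v where "v = euler_seq eps h u0 m"
      have s: "\<bar>v\<bar> \<le> \<bar>v - k * (v^3 - v)\<bar> \<and> \<bar>v - k * (v^3 - v)\<bar> \<le> 1"
        using stepB_abs[OF k0 kb, of v] inv[of m] unfolding v_def by simp
      have "energy eps \<bar>v - k * (v^3 - v)\<bar> \<le> energy eps \<bar>v\<bar>"
        using s by (intro en_le2) auto
      hence "energy eps (v - k * (v^3 - v)) \<le> energy eps v" by (simp only: en_abs)
      thus "energy eps (euler_seq eps h u0 n) \<le> energy eps (euler_seq eps h u0 (n - 1))"
        using m rec[of m] v_def by simp
    qed
  qed
qed

end
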